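(* Let $N=2n+2d-4$ and write $P(t)=\sum_{k=0}^{N}p_k t^k$ (some top coefficients possibly zero), each $p_k$ an affine-linear function of $(x,y)$. Let $\tilde P(t)=NP(t)-tP'(t)$ and define $$\Upsilon(x,y)=(-1)^{N(N-1)/2}\det S_{N-1,N-1}(\tilde P,P'),$$ where $\tilde P$ and $P'$ are regarded as polynomials of formal degree $N-1$. Then $\Upsilon$ is a polynomial in $x,y$ of total degree at most $4(n+d)-10$, and $\Upsilon(x,y)=0$ for every $(x,y)\in\mathbb R^2$ for which there exists $\phi\in(-\varkappa,\varkappa)$, $\phi\neq0$, with $g(\phi)=0$ and $g'(\phi)=0$ (derivative in $\phi$). In particular the portion of the arctic curve given parametrically by such double roots lies on the algebraic curve $\Upsilon(x,y)=0$ of degree at most $4(n+d)-10$.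
   Context: Fix $0<\eta<\pi/2$ and set $\alpha=\pi/(\pi-2\eta)$. Assume $\alpha=n/d$ with $n>d\ge 1$ coprime integers, so that $\eta=\frac{\pi}{2}\cdot\frac{n-d}{n}$. Fix $\lambda\in(\eta,\pi-\eta)$ and put $\varkappa=(\pi-\lambda-\eta)/2$. For real $x,y$ and $\phi\in(-\varkappa,\varkappa)$ let $$g(\phi)=\frac{x\sin2\eta}{\sin(\varkappa-\phi)\sin(\varkappa+2\eta-\phi)}+\frac{y\sin2\eta}{\sin(\varkappa+\phi)\sin(\varkappa+2\eta+\phi)}-\frac{\sin2\varkappa}{\sin(\varkappa+\phi)\sin(\varkappa-\phi)}+\frac{\alpha\sin2\alpha\varkappa}{\sin\alpha(\varkappa+\phi)\sin\alpha(\varkappa-\phi)}.$$ Define $\rho=\dfrac{\sin2\eta}{\sin\varkappa\,\sin(\varkappa+2\eta)}$, $v_k=\cot(\frac{\varkappa}{d}+\frac{\pi k}{d})$, $u_k=\cot(\frac{\varkappa}{d}+\frac{2\eta}{d}+\frac{\pi k}{d})$ ($k=0,\dots,d-1$), $w_j=\cot(\frac{\varkappa}{d}+\frac{\pi j}{n})$ ($j=0,\dots,n-1$), and $$R(t)=x\rho\frac{(t^2+1)^d}{\prod_{k}(t-v_k)(t-u_k)}+y\rho\frac{(t^2+1)^d}{\prod_{k}(t+v_k)(t+u_k)}-2\cot\varkappa\,\frac{(t^2+1)^d}{\prod_{k}(t-v_k)(t+v_k)}+2\alpha\cot(\alpha\varkappa)\,\frac{(t^2+1)^n}{\prod_{j}(t-w_j)(t+w_j)},$$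 so that $g(\phi)=R(\cot(\phi/d))$. Let $Q(t)=\prod_{j=0}^{n-1}(t-w_j)(t+w_j)\prod_{k=1}^{d-1}(t-v_k)(t+v_k)\prod_{k=0}^{d-2}(t-u_k)(t+u_k)$ and $P(t)=Q(t)R(t)/(t^2+1)^d$, a polynomial in $t$ of degree at most $2n+2d-4$. For polynomials $A(t)=\sum_{k=0}^{m_A}a_kt^k$, $B(t)=\sum_{k=0}^{m_B}b_kt^k$, the Sylvester matrix $S_{m_A,m_B}(A,B)$ is the $(m_A+m_B)\times(m_A+m_B)$ matrix whose first $m_B$ rows are the successive right shifts of $(a_0,a_1,\dots,a_{m_A},0,\dots,0)$ and whose last $m_A$ rows are the successive right shifts of $(b_0,b_1,\dots,b_{m_B},0,\dots,0)$. *)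

theory Defs
  imports Complex_Main "HOL-Computational_Algebra.Polynomial" "Jordan_Normal_Form.Determinant"
begin

definition alpha :: "real \<Rightarrow> real" where
  "alpha eta = pi / (pi - 2 * eta)"

definition kappa :: "real \<Rightarrow> real \<Rightarrow> real" where
  "kappa eta lam = (pi - lam - eta) / 2"

definition gfun :: "real \<Rightarrow> real \<Rightarrow> real \<Rightarrow> real \<Rightarrow> real \<Rightarrow> real" where
  "gfun eta lam x y phi =
     (let k = kappa eta lam; a = alpha eta in
        x * sin (2*eta) / (sin (k - phi) * sin (k + 2*eta - phi))
      + y * sin (2*eta) / (sin (k + phi) * sin (k + 2*eta + phi))
      - sin (2*k) / (sin (k + phi) * sin (k - phi))
      + a * sin (2*a*k) / (sin (a*(k + phi)) * sin (a*(k - phi))))"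

definition rho :: "real \<Rightarrow> real \<Rightarrow> real" where
  "rho eta lam = sin (2*eta) / (sin (kappa eta lam) * sin (kappa eta lam + 2*eta))"

definition vv :: "real \<Rightarrow> real \<Rightarrow> nat \<Rightarrow> nat \<Rightarrow> real" where
  "vv eta lam d k = cot (kappa eta lam / d + pi * k / d)"

definition uu :: "real \<Rightarrow> real \<Rightarrow> nat \<Rightarrow> nat \<Rightarrow> real" where
  "uu eta lam d k = cot (kappa eta lam / d + 2*eta / d + pi * k / d)"

definition ww :: "real \<Rightarrow> real \<Rightarrow> nat \<Rightarrow> nat \<Rightarrow> nat \<Rightarrow> real" where
  "ww eta lam n d j = cot (kappa eta lam / d + pi * j / n)"

definition lin_minus :: "real \<Rightarrow> real poly" where "lin_minus c = [:-c, 1:]"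
definition lin_plus :: "real \<Rightarrow> real poly" where "lin_plus c = [:c, 1:]"

definition Qpoly :: "real \<Rightarrow> real \<Rightarrow> nat \<Rightarrow> nat \<Rightarrow> real poly" where
  "Qpoly eta lam n d =
     (\<Prod>j<n. lin_minus (ww eta lam n d j) * lin_plus (ww eta lam n d j))
   * (\<Prod>k\<in>{1..<d}. lin_minus (vv eta lam d k) * lin_plus (vv eta lam d k))
   * (\<Prod>k<d-1. lin_minus (uu eta lam d k) * lin_plus (uu eta lam d k))"

text \<open>Denominators of the four summands of R(t).\<close>
definition D1 :: "real \<Rightarrow> real \<Rightarrow> nat \<Rightarrow> real poly" where
  "D1 eta lam d = (\<Prod>k<d. lin_minus (vv eta lam d k) * lin_minus (uu eta lam d k))"
definition D2 :: "real \<Rightarrow> real \<Rightarrow> nat \<Rightarrow> real poly" where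
  "D2 eta lam d = (\<Prod>k<d. lin_plus (vv eta lam d k) * lin_plus (uu eta lam d k))"
definition D3 :: "real \<Rightarrow> real \<Rightarrow> nat \<Rightarrow> real poly" where
  "D3 eta lam d = (\<Prod>k<d. lin_minus (vv eta lam d k) * lin_plus (vv eta lam d k))"
definition D4 :: "real \<Rightarrow> real \<Rightarrow> nat \<Rightarrow> nat \<Rightarrow> real poly" where
  "D4 eta lam n d = (\<Prod>j<n. lin_minus (ww eta lam n d j) * lin_plus (ww eta lam n d j))"

text \<open>P(t) = Q(t) R(t) / (t^2+1)^d, written term by term; each division
  Q / D_i is exact (Q contains every factor of D_i), so polynomial division
  computes the exact quotient.\<close>
definition Ppoly :: "real \<Rightarrow> real \<Rightarrow> nat \<Rightarrow> nat \<Rightarrow> real \<Rightarrow> real \<Rightarrow> real poly" where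
  "Ppoly eta lam n d x y =
     (let Q = Qpoly eta lam n d; k = kappa eta lam; a = alpha eta in
        smult (x * rho eta lam) (Q div D1 eta lam d)
      + smult (y * rho eta lam) (Q div D2 eta lam d)
      - smult (2 * cot k) (Q div D3 eta lam d)
      + smult (2 * a * cot (a * k)) ([:1, 0, 1:] ^ (n - d) * (Q div D4 eta lam n d)))"

definition sylvester :: "nat \<Rightarrow> nat \<Rightarrow> 'a::comm_ring_1 poly \<Rightarrow> 'a poly \<Rightarrow> 'a mat" where
  "sylvester mA mB A B = mat (mA + mB) (mA + mB) (\<lambda>(i, j).
     if i < mB then (if i \<le> j \<and> j - i \<le> mA then coeff A (j - i) else 0)
     else (if i - mB \<le> j \<and> j - (i - mB) \<le> mB then coeff B (j - (i - mB)) else 0))"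

definition Nn :: "nat \<Rightarrow> nat \<Rightarrow> nat" where "Nn n d = 2*n + 2*d - 4"

definition Upsilon :: "real \<Rightarrow> real \<Rightarrow> nat \<Rightarrow> nat \<Rightarrow> real \<Rightarrow> real \<Rightarrow> real" where
  "Upsilon eta lam n d x y =
     (let N = Nn n d; P = Ppoly eta lam n d x y;
          Pt = smult (of_nat N) P - [:0, 1:] * pderiv P in
      (-1) ^ (N * (N - 1) div 2) * det (sylvester (N - 1) (N - 1) Pt (pderiv P)))"

end

theory Submission
  imports Defs
begin



lemma cis_diff_neg: "cis x - cis (-x) = 2*\<i>*complex_of_real(sin x)"
  by (simp add: complex_eq_iff)

lemma one_minus_cis2: "1 - cis (2*x) = - cis x * (2*\<i>*complex_of_real(sin x))"
  by (simp add: complex_eq_iff cos_double_sin sin_double power2_eq_square)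

lemma cis_prod: "(\<Prod>k\<in>A. cis (f k)) = cis (\<Sum>k\<in>A. f k)"
  by (induction A rule: infinite_finite_induct) (auto simp: cis_mult)

lemma roots_unity_prod:
  assumes m: "0 < m"
  shows "(\<Prod>k<m. (z::complex) - cis (2*pi*real k/real m)) = z ^ m - 1"
proof -
  let ?w = "\<lambda>k. cis (2*pi*real k/real m)"
  define p where "p = (\<Prod>k<m. [:- ?w k, 1:])"
  define q where "q = (monom (1::complex) m - 1)"
  have dp: "degree p = m" unfolding p_def
    by (subst degree_prod_sum_eq) auto
  have lp: "lead_coeff p = 1" unfolding p_def lead_coeff_prod by simp
  have dq: "degree q \<le> m" unfolding q_def
    by (rule order_trans[OF degree_diff_le_max]) (auto simp: degree_monom_le)
  have cq: "coeff q m = 1" using m by (simp add: q_def)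
  have "p = q"
  proof (rule poly_eqI_degree_lead_coeff[where n=m and A="{z. z^m = 1}"])
    show "coeff p m = coeff q m" using lp dp cq by simp
    show "m \<le> card {z::complex. z^m = 1}" using card_roots_unity_eq[OF m] by simp
    show "degree p \<le> m" using dp by simp
    show "degree q \<le> m" by fact
    fix z :: complex assume "z \<in> {z. z^m = 1}"
    then obtain k where k: "k < m" "z = ?w k"
      using bij_betw_roots_unity[OF m] unfolding bij_betw_def by auto
    have "poly p z = 0" unfolding p_def poly_prod using k by (auto intro!: bexI[of _ k])
    moreover have "poly q z = 0" using \<open>z \<in> _\<close> by (simp add: q_def poly_monom)
    ultimately show "poly p z = poly q z" by simp
  qed
  hence "poly p z = poly q z" by simp
  thus ?thesis by (simp add: p_def q_def poly_prod poly_monom)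
qed

lemma roots_unity_prod2:
  assumes m: "0 < m" and u: "(u::complex) \<noteq> 0"
  shows "(\<Prod>k<m. 1 - u * cis (2*pi*real k/real m)) = 1 - u ^ m"
proof -
  have "(\<Prod>k<m. 1 - u * cis (2*pi*real k/real m)) = (\<Prod>k<m. u * (inverse u - cis (2*pi*real k/real m)))"
    using u by (intro prod.cong) (auto simp: field_simps)
  also have "\<dots> = u ^ m * (inverse u ^ m - 1)"
    by (simp add: prod.distrib roots_unity_prod[OF m])
  also have "\<dots> = 1 - u ^ m" using u by (simp add: field_simps power_inverse)
  finally show ?thesis .
qed

lemma sum_lessThan_real: "(\<Sum>k<m. real k) = real m * (real m - 1) / 2"
  by (induction m) (auto simp: field_simps)

lemma sin_prod_formula:
  assumes m: "0 < m"
  shows "(\<Prod>k<m. sin (th + pi * real k / real m)) = sin (real m * th) / 2 ^ (m - 1)"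
proof -
  let ?a = "\<lambda>k. th + pi * real k / real m"
  define u where "u = cis (2*th)"
  have u0: "u \<noteq> 0" by (simp add: u_def)
  have one: "complex_of_real (sin (?a k)) = - cis (- ?a k) * (1 - u * cis (2*pi*real k/real m)) / (2*\<i>)" for k
  proof -
    have "u * cis (2*pi*real k/real m) = cis (2 * ?a k)"
      by (simp add: u_def cis_mult field_simps)
    moreover have "cis (- ?a k) * cis (2 * ?a k) = cis (?a k)" by (simp add: cis_mult)
    ultimately have "- cis (- ?a k) * (1 - u * cis (2*pi*real k/real m)) = cis (?a k) - cis (- ?a k)"
      by (simp add: algebra_simps)
    also have "\<dots> = 2 * \<i> * complex_of_real (sin (?a k))"
      by (rule cis_diff_neg)
    finally show ?thesis by simp
  qed
  have "complex_of_real (\<Prod>k<m. sin (?a k)) = (\<Prod>k<m. - cis (- ?a k) * (1 - u * cis (2*pi*real k/real m)) / (2*\<i>))"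
    by (simp add: one)
  also have "\<dots> = (- 1 / (2*\<i>)) ^ m * cis (\<Sum>k<m. - ?a k) * (1 - u ^ m)"
    by (simp add: prod.distrib prod_dividef cis_prod roots_unity_prod2[OF m u0] power_divide)
  also have "(\<Sum>k<m. - ?a k) = - (real m * th) - pi * (real m - 1) / 2"
    using m by (simp add: sum.distrib sum_negf sum_divide_distrib[symmetric] sum_distrib_left[symmetric] sum_lessThan_real field_simps)
  also have "1 - u ^ m = - cis (real m * th) * (2 * \<i> * complex_of_real (sin (real m * th)))"
    using one_minus_cis2[of "real m * th"] by (simp add: u_def DeMoivre mult_ac)
  also have "(- 1 / (2*\<i>)) ^ m * cis (- (real m * th) - pi * (real m - 1) / 2) * (- cis (real m * th) * (2 * \<i> * complex_of_real (sin (real m * th))))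
     = (- 1 / (2*\<i>)) ^ m * (-2 * \<i>) * (cis (real m * th) * cis (- (real m * th) - pi * (real m - 1) / 2)) * complex_of_real (sin (real m * th))"
    by (simp only: mult_ac) simp
  also have "cis (real m * th) * cis (- (real m * th) - pi * (real m - 1) / 2) = cis (- pi * (real m - 1) / 2)"
    unfolding cis_mult by (rule arg_cong[where f=cis]) (simp add: field_simps)
  finally have "complex_of_real (\<Prod>k<m. sin (?a k)) = (- 1 / (2*\<i>)) ^ m * (-2 * \<i>) * cis (- pi * (real m - 1) / 2) * complex_of_real (sin (real m * th))"
    .
  also have "cis (- pi * (real m - 1) / 2) = (- \<i>) ^ (m - 1)"
  proof -
    have "cis (- pi * (real m - 1) / 2) = cis (real (m - 1) * (- pi/2))"
      using m by (intro arg_cong[where f=cis]) (simp add: of_nat_diff field_simps)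
    hence "cis (- pi * (real m - 1) / 2) = cis (- pi/2) ^ (m - 1)"
      by (simp only: DeMoivre)
    thus ?thesis by (simp add: complex_eq_iff)
  qed
  also have "(- 1 / (2*\<i>)) ^ m * (-2 * \<i>) = (\<i> / 2) ^ (m - 1)"
  proof -
    have "(- 1 / (2*\<i>)) ^ m = (- 1 / (2*\<i>)) ^ (m-1) * (- 1 / (2*\<i>))"
      using m by (metis Suc_diff_1 power_Suc2)
    moreover have "- 1 / (2*\<i>) = \<i> / 2" by (simp add: field_simps)
    moreover have "(\<i> / 2) * (-2 * \<i>) = 1" by (simp add: field_simps)
    ultimately show ?thesis by (metis mult.assoc mult_1_right)
  qed
  finally have A: "complex_of_real (\<Prod>k<m. sin (?a k)) = ((\<i> / 2) * (- \<i>)) ^ (m - 1) * complex_of_real (sin (real m * th))"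
    by (simp only: power_mult_distrib)
  have B: "(\<i> / 2) * (- \<i>) = complex_of_real (1/2)" by (simp add: field_simps)
  have "complex_of_real (\<Prod>k<m. sin (?a k)) = complex_of_real ((1/2)^(m-1) * sin (real m * th))"
    unfolding A B of_real_mult of_real_power ..
  hence "(\<Prod>k<m. sin (?a k)) = (1/2)^(m-1) * sin (real m * th)" using of_real_eq_iff by blast
  thus ?thesis by (simp add: power_divide)
qed

lemma cot_diff_eq: "sin b \<noteq> 0 \<Longrightarrow> sin c \<noteq> 0 \<Longrightarrow> cot b - cot c = sin (c - b) / (sin b * sin c)"
  by (simp add: cot_def sin_diff field_simps)

lemma cot_add_eq: "sin b \<noteq> 0 \<Longrightarrow> sin c \<noteq> 0 \<Longrightarrow> cot b + cot c = sin (b + c) / (sin b * sin c)"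
  by (simp add: cot_def sin_add field_simps)

lemma cot_prod_minus:
  assumes m: "0 < m" and b: "sin b \<noteq> 0" and c: "\<And>k. k < m \<Longrightarrow> sin (c + pi * real k / real m) \<noteq> 0"
  shows "(\<Prod>k<m. cot b - cot (c + pi * real k / real m)) = sin (real m * (c - b)) / (sin b ^ m * sin (real m * c))"
proof -
  have "(\<Prod>k<m. cot b - cot (c + pi * real k / real m)) = (\<Prod>k<m. sin ((c - b) + pi * real k / real m) / (sin b * sin (c + pi * real k / real m)))"
    using b c by (intro prod.cong refl) (simp add: cot_diff_eq algebra_simps)
  also have "\<dots> = (\<Prod>k<m. sin ((c - b) + pi * real k / real m)) / (sin b ^ m * (\<Prod>k<m. sin (c + pi * real k / real m)))"
    by (simp add: prod_dividef prod.distrib)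
  also have "\<dots> = sin (real m * (c - b)) / (sin b ^ m * sin (real m * c))"
    unfolding sin_prod_formula[OF m] by (simp add: field_simps)
  finally show ?thesis .
qed

lemma cot_prod_plus:
  assumes m: "0 < m" and b: "sin b \<noteq> 0" and c: "\<And>k. k < m \<Longrightarrow> sin (c + pi * real k / real m) \<noteq> 0"
  shows "(\<Prod>k<m. cot b + cot (c + pi * real k / real m)) = sin (real m * (c + b)) / (sin b ^ m * sin (real m * c))"
proof -
  have "(\<Prod>k<m. cot b + cot (c + pi * real k / real m)) = (\<Prod>k<m. sin ((c + b) + pi * real k / real m) / (sin b * sin (c + pi * real k / real m)))"
    using b c by (intro prod.cong refl) (simp add: cot_add_eq algebra_simps)
  also have "\<dots> = (\<Prod>k<m. sin ((c + b) + pi * real k / real m)) / (sin b ^ m * (\<Prod>k<m. sin (c + pi * real k / real m)))"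
    by (simp add: prod_dividef prod.distrib)
  also have "\<dots> = sin (real m * (c + b)) / (sin b ^ m * sin (real m * c))"
    unfolding sin_prod_formula[OF m] by (simp add: field_simps)
  finally show ?thesis .
qed




definition Tm :: "nat \<Rightarrow> (nat \<times> nat) set" where "Tm m = {p. fst p + snd p \<le> m}"

lemma finite_Tm: "finite (Tm m)"
  by (rule finite_subset[of _ "{..m} \<times> {..m}"]) (auto simp: Tm_def)

definition pf :: "nat \<Rightarrow> (real \<Rightarrow> real \<Rightarrow> real) \<Rightarrow> bool" where
  "pf m f \<longleftrightarrow> (\<exists>c. \<forall>x y. f x y = (\<Sum>p\<in>Tm m. c p * x ^ fst p * y ^ snd p))"

lemma pf_group:
  assumes "finite S" "\<And>s. s \<in> S \<Longrightarrow> fst (e s) + snd (e s) \<le> m"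
    and "\<And>x y. f x y = (\<Sum>s\<in>S. k s * x ^ fst (e s) * y ^ snd (e s))"
  shows "pf m f"
  unfolding pf_def
proof (intro exI allI)
  fix x y :: real
  have "(\<Sum>p\<in>Tm m. (\<Sum>s\<in>{s\<in>S. e s = p}. k s) * x ^ fst p * y ^ snd p)
      = (\<Sum>p\<in>Tm m. (\<Sum>s\<in>{s\<in>S. e s = p}. k s * x ^ fst (e s) * y ^ snd (e s)))"
    by (intro sum.cong refl) (auto simp: sum_distrib_right)
  also have "\<dots> = (\<Sum>s\<in>S. k s * x ^ fst (e s) * y ^ snd (e s))"
    using assms by (intro sum.group finite_Tm) (auto simp: Tm_def)
  finally show "f x y = (\<Sum>p\<in>Tm m. (\<Sum>s\<in>{s\<in>S. e s = p}. k s) * x ^ fst p * y ^ snd p)"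
    using assms(3) by simp
qed

lemma pf_mono: assumes "pf a f" "a \<le> b" shows "pf b f"
proof -
  obtain c where c: "\<And>x y. f x y = (\<Sum>p\<in>Tm a. c p * x ^ fst p * y ^ snd p)" using assms unfolding pf_def by blast
  show ?thesis by (rule pf_group[where S="Tm a" and e=id and k=c]) (use assms c finite_Tm in \<open>auto simp: Tm_def\<close>)
qed

lemma pf_add: assumes "pf m f" "pf m g" shows "pf m (\<lambda>x y. f x y + g x y)"
proof -
  obtain c where c: "\<And>x y. f x y = (\<Sum>p\<in>Tm m. c p * x ^ fst p * y ^ snd p)" using assms unfolding pf_def by blast
  obtain c' where c': "\<And>x y. g x y = (\<Sum>p\<in>Tm m. c' p * x ^ fst p * y ^ snd p)" using assms unfolding pf_def by blast
  show ?thesis unfolding pf_def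
    by (rule exI[of _ "\<lambda>p. c p + c' p"]) (simp add: c c' sum.distrib[symmetric] algebra_simps)
qed

lemma pf_mult: assumes "pf a f" "pf b g" shows "pf (a + b) (\<lambda>x y. f x y * g x y)"
proof -
  obtain c where c: "\<And>x y. f x y = (\<Sum>p\<in>Tm a. c p * x ^ fst p * y ^ snd p)" using assms unfolding pf_def by blast
  obtain c' where c': "\<And>x y. g x y = (\<Sum>p\<in>Tm b. c' p * x ^ fst p * y ^ snd p)" using assms unfolding pf_def by blast
  show ?thesis
  proof (rule pf_group[where S="Tm a \<times> Tm b" and e="\<lambda>(p,q). (fst p + fst q, snd p + snd q)"
          and k="\<lambda>(p,q). c p * c' q"])
    show "finite (Tm a \<times> Tm b)" using finite_Tm by simp
    show "\<And>s. s \<in> Tm a \<times> Tm b \<Longrightarrow> fst ((\<lambda>(p,q). (fst p + fst q, snd p + snd q)) s) + snd ((\<lambda>(p,q). (fst p + fst q, snd p + snd q)) s) \<le> a + b"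
      by (auto simp: Tm_def)
    fix x y :: real
    have "f x y * g x y = (\<Sum>p\<in>Tm a. \<Sum>q\<in>Tm b. (c p * x ^ fst p * y ^ snd p) * (c' q * x ^ fst q * y ^ snd q))"
      by (simp add: c c' sum_product)
    also have "\<dots> = (\<Sum>(p,q)\<in>Tm a \<times> Tm b. (c p * x ^ fst p * y ^ snd p) * (c' q * x ^ fst q * y ^ snd q))"
      by (rule sum.cartesian_product)
    also have "\<dots> = (\<Sum>s\<in>Tm a \<times> Tm b. (\<lambda>(p,q). c p * c' q) s * x ^ fst ((\<lambda>(p,q). (fst p + fst q, snd p + snd q)) s) * y ^ snd ((\<lambda>(p,q). (fst p + fst q, snd p + snd q)) s))"
      by (intro sum.cong refl) (auto simp: power_add)
    finally show "f x y * g x y = \<dots>" .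
  qed
qed

lemma pf_const: "pf m (\<lambda>x y. c)"
  by (rule pf_group[where S="{()}" and e="\<lambda>_. (0,0)" and k="\<lambda>_. c"]) auto

lemma pf_x: "1 \<le> m \<Longrightarrow> pf m (\<lambda>x y. x)"
  by (rule pf_group[where S="{()}" and e="\<lambda>_. (1,0)" and k="\<lambda>_. 1"]) auto

lemma pf_y: "1 \<le> m \<Longrightarrow> pf m (\<lambda>x y. y)"
  by (rule pf_group[where S="{()}" and e="\<lambda>_. (0,1)" and k="\<lambda>_. 1"]) auto

lemma pf_scale: "pf m f \<Longrightarrow> pf m (\<lambda>x y. c * f x y)"
  using pf_mult[OF pf_const[of 0 c]] by simp

lemma pf_affine: "pf 1 (\<lambda>x y. a * x + b * y + c)"
  by (intro pf_add pf_scale pf_x pf_y pf_const) auto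

lemma pf_sum: "finite I \<Longrightarrow> (\<And>i. i \<in> I \<Longrightarrow> pf m (f i)) \<Longrightarrow> pf m (\<lambda>x y. \<Sum>i\<in>I. f i x y)"
  by (induction I rule: finite_induct) (auto intro!: pf_add pf_const)

lemma pf_prod: "finite I \<Longrightarrow> (\<And>i. i \<in> I \<Longrightarrow> pf 1 (f i)) \<Longrightarrow> pf (card I) (\<lambda>x y. \<Prod>i\<in>I. f i x y)"
proof (induction I rule: finite_induct)
  case empty then show ?case using pf_const[of 0 1] by simp
next
  case (insert i F)
  then show ?case using pf_mult[of 1 "f i" "card F" "\<lambda>x y. \<Prod>i\<in>F. f i x y"] by simp
qed

lemma pf_final:
  assumes "pf M f"
  shows "\<exists>c :: nat \<Rightarrow> nat \<Rightarrow> real. \<forall>x y. f x y = (\<Sum>i\<le>M. \<Sum>j\<le>M-i. c i j * x ^ i * y ^ j)"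
proof -
  obtain c where c: "\<And>x y. f x y = (\<Sum>p\<in>Tm M. c p * x ^ fst p * y ^ snd p)" using assms unfolding pf_def by blast
  have T: "Tm M = Sigma {..M} (\<lambda>i. {..M-i})" by (auto simp: Tm_def)
  show ?thesis
  proof (intro exI allI)
    fix x y :: real
    show "f x y = (\<Sum>i\<le>M. \<Sum>j\<le>M-i. (\<lambda>i j. c (i,j)) i j * x ^ i * y ^ j)"
      unfolding c T by (subst sum.Sigma) (auto simp: case_prod_beta)
  qed
qed




lemma shift_sum:
  fixes t :: "'a::comm_ring_1"
  assumes "i + K < L"
  shows "(\<Sum>j<L. (if i \<le> j \<and> j - i \<le> K then c (j - i) else 0) * t ^ j) = t ^ i * (\<Sum>k\<le>K. c k * t ^ k)"
proof -
  have "t ^ i * (\<Sum>k\<le>K. c k * t ^ k) = (\<Sum>k\<le>K. c ((i + k) - i) * t ^ (i + k))"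
    by (simp add: sum_distrib_left power_add mult_ac)
  also have "\<dots> = (\<Sum>j\<in>(\<lambda>k. i + k) ` {..K}. c (j - i) * t ^ j)"
    by (subst sum.reindex) (auto simp: inj_on_def)
  also have "\<dots> = (\<Sum>j<L. (if i \<le> j \<and> j - i \<le> K then c (j - i) else 0) * t ^ j)"
  proof (rule sum.mono_neutral_cong_left)
    show "(\<lambda>k. i + k) ` {..K} \<subseteq> {..<L}" using assms by auto
    show "\<forall>j\<in>{..<L} - (\<lambda>k. i + k) ` {..K}. (if i \<le> j \<and> j - i \<le> K then c (j - i) else 0) * t ^ j = 0"
    proof
      fix j assume "j \<in> {..<L} - (\<lambda>k. i + k) ` {..K}"
      have "\<not> (i \<le> j \<and> j - i \<le> K)"
      proof
        assume h: "i \<le> j \<and> j - i \<le> K"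
        hence "j = i + (j - i)" by simp
        hence "j \<in> (\<lambda>k. i + k) ` {..K}" using h by blast
        thus False using \<open>j \<in> {..<L} - _\<close> by blast
      qed
      thus "(if i \<le> j \<and> j - i \<le> K then c (j - i) else 0) * t ^ j = 0" by auto
    qed
    show "\<And>x. x \<in> (\<lambda>k. i + k) ` {..K} \<Longrightarrow> c (x - i) * t ^ x = (if i \<le> x \<and> x - i \<le> K then c (x - i) else 0) * t ^ x"
      by auto
  qed simp
  finally show ?thesis by simp
qed

lemma poly_as_sum_le:
  fixes A :: "'a::comm_ring_1 poly"
  assumes "degree A \<le> K"
  shows "poly A t = (\<Sum>k\<le>K. coeff A k * t ^ k)"
proof -
  have "(\<Sum>k\<le>K. coeff A k * t ^ k) = (\<Sum>k\<le>degree A. coeff A k * t ^ k)"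
    using assms by (intro sum.mono_neutral_right) (auto simp: coeff_eq_0)
  thus ?thesis using poly_altdef[of A t] by simp
qed
  
lemma sylvester_det_zero:
  fixes A B :: "real poly"
  assumes dA: "degree A \<le> mA" and dB: "degree B \<le> mB"
    and zA: "poly A t = 0" and zB: "poly B t = 0" and pos: "0 < mA + mB"
  shows "det (sylvester mA mB A B) = 0"
proof -
  let ?L = "mA + mB"
  let ?M = "sylvester mA mB A B"
  have car: "?M \<in> carrier_mat ?L ?L" by (simp add: sylvester_def)
  define v where "v = vec ?L (\<lambda>j. t ^ j)"
  have vc: "v \<in> carrier_vec ?L" by (simp add: v_def)
  have vnz: "v \<noteq> 0\<^sub>v ?L"
  proof
    assume "v = 0\<^sub>v ?L"
    hence "v $ 0 = 0\<^sub>v ?L $ 0" by simp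
    thus False using pos by (simp add: v_def)
  qed
  have "?M *\<^sub>v v = 0\<^sub>v ?L"
  proof (rule eq_vecI)
    fix i assume i: "i < dim_vec (0\<^sub>v ?L :: real vec)"
    hence i: "i < ?L" by simp
    have "(?M *\<^sub>v v) $ i = (\<Sum>j<?L. ?M $$ (i, j) * t ^ j)"
      using i by (simp add: mult_mat_vec_def scalar_prod_def v_def sylvester_def lessThan_atLeast0)
    also have "\<dots> = 0"
    proof (cases "i < mB")
      case True
      have "(\<Sum>j<?L. ?M $$ (i, j) * t ^ j) = (\<Sum>j<?L. (if i \<le> j \<and> j - i \<le> mA then coeff A (j - i) else 0) * t ^ j)"
        using True i by (intro sum.cong refl) (simp add: sylvester_def)
      also have "\<dots> = t ^ i * (\<Sum>k\<le>mA. coeff A k * t ^ k)"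
        using True by (intro shift_sum) simp
      also have "\<dots> = 0" using zA poly_as_sum_le[OF dA, of t] by simp
      finally show ?thesis .
    next
      case False
      have "(\<Sum>j<?L. ?M $$ (i, j) * t ^ j) = (\<Sum>j<?L. (if i - mB \<le> j \<and> j - (i - mB) \<le> mB then coeff B (j - (i - mB)) else 0) * t ^ j)"
        using False i by (intro sum.cong refl) (simp add: sylvester_def)
      also have "\<dots> = t ^ (i - mB) * (\<Sum>k\<le>mB. coeff B k * t ^ k)"
        using False i by (intro shift_sum) simp
      also have "\<dots> = 0" using zB poly_as_sum_le[OF dB, of t] by simp
      finally show ?thesis .
    qed
    finally show "(?M *\<^sub>v v) $ i = 0\<^sub>v ?L $ i" using i by simp
  qed (simp add: sylvester_def)
  thus ?thesis using det_0_iff_vec_prod_zero_field[OF car] vc vnz by blast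
qed




lemma sin_ne0: "0 < x \<Longrightarrow> x < pi \<Longrightarrow> sin x \<noteq> 0"
  using sin_gt_zero by fastforce

context
  fixes eta lam :: real and n d :: nat
  assumes eta0: "0 < eta" and eta1: "eta < pi/2" and d1: "1 \<le> d" and dn: "d < n"
    and al: "alpha eta = real n / real d" and l0: "eta < lam" and l1: "lam < pi - eta"
begin

lemma dpos: "0 < real d" using d1 by simp
lemma npos: "0 < real n" using d1 dn by simp

lemma eta_eq: "2 * eta = pi - pi * real d / real n"
proof -
  have "pi - 2*eta > 0" using eta1 by simp
  hence "pi * real d = real n * (pi - 2*eta)" using al dpos unfolding alpha_def by (simp add: field_simps)
  thus ?thesis using npos by (simp add: field_simps)
qed

lemma kap_pos: "0 < kappa eta lam" using l1 by (simp add: kappa_def)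
lemma kap_lt: "kappa eta lam < pi * real d / (2 * real n)"
  using eta_eq l0 by (simp add: kappa_def field_simps)
lemma kap_lt2: "kappa eta lam + eta < pi / 2"
  using l0 by (simp add: kappa_def field_simps)
lemma alkap: "alpha eta * kappa eta lam < pi / 2"
proof -
  have "alpha eta * kappa eta lam = (real n * kappa eta lam) / real d" using al by simp
  moreover have "real n * kappa eta lam < pi * real d / 2"
    using kap_lt npos by (simp add: field_simps)
  ultimately have "alpha eta * kappa eta lam < (pi * real d / 2) / real d"
    using dpos by (metis divide_strict_right_mono)
  thus ?thesis using dpos by simp
qed
lemma al_pos: "0 < alpha eta" using al dpos npos by simp

lemma v_cond: "k < d \<Longrightarrow> sin (kappa eta lam / real d + pi * real k / real d) \<noteq> 0"
proof -
  assume k: "k < d"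
  hence "real k + 1 \<le> real d" by linarith
  hence "pi * real k + pi \<le> pi * real d" using pi_gt_zero
    by (metis distrib_left mult.right_neutral mult_le_cancel_left_pos)
  hence "kappa eta lam + pi * real k < pi * real d" using kap_lt2 eta0 pi_gt_zero by linarith
  hence "kappa eta lam / real d + pi * real k / real d < pi" using dpos by (simp add: field_simps)
  moreover have "0 < kappa eta lam / real d + pi * real k / real d" using kap_pos dpos by (simp add: add_pos_nonneg)
  ultimately show ?thesis by (intro sin_ne0)
qed

lemma u_cond: "k < d \<Longrightarrow> sin (kappa eta lam / real d + 2 * eta / real d + pi * real k / real d) \<noteq> 0"
proof -
  assume k: "k < d"
  hence "real k + 1 \<le> real d" by linarith
  hence "pi * real k + pi \<le> pi * real d" using pi_gt_zero
    by (metis distrib_left mult.right_neutral mult_le_cancel_left_pos)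
  hence "kappa eta lam + 2 * eta + pi * real k < pi * real d" using kap_lt2 eta1 by linarith
  hence "kappa eta lam / real d + 2 * eta / real d + pi * real k / real d < pi" using dpos by (simp add: field_simps)
  moreover have "0 < kappa eta lam / real d + 2 * eta / real d + pi * real k / real d" using kap_pos dpos eta0
    by (intro add_pos_nonneg) auto
  ultimately show ?thesis by (intro sin_ne0)
qed

lemma w_cond: "j < n \<Longrightarrow> sin (kappa eta lam / real d + pi * real j / real n) \<noteq> 0"
proof -
  assume k: "j < n"
  hence "real j + 1 \<le> real n" by linarith
  hence "pi * real j + pi \<le> pi * real n" using pi_gt_zero
    by (metis distrib_left mult.right_neutral mult_le_cancel_left_pos)
  moreover have "kappa eta lam * real n < pi * real d"
  proof -
    have "real n * kappa eta lam < pi * real d / 2" using kap_lt npos by (simp add: field_simps)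
    moreover have "pi * real d > 0" using dpos by simp
    ultimately show ?thesis by (simp add: mult.commute)
  qed
  ultimately have "kappa eta lam * real n + pi * real j * real d < pi * real n * real d" using dpos
    by (smt (verit, best) mult_right_mono distrib_right mult.commute)
  hence "kappa eta lam / real d + pi * real j / real n < pi" using dpos npos by (simp add: field_simps)
  moreover have "0 < kappa eta lam / real d + pi * real j / real n" using kap_pos dpos npos by (simp add: add_pos_nonneg)
  ultimately show ?thesis by (intro sin_ne0)
qed

lemma prod_v_minus: assumes sb: "sin (phi / real d) \<noteq> 0"
  shows "(\<Prod>k<d. cot (phi / real d) - vv eta lam d k) = sin (kappa eta lam - phi) / (sin (phi / real d) ^ d * sin (kappa eta lam))"
proof -
  have "(\<Prod>k<d. cot (phi / real d) - vv eta lam d k) = sin (real d * ((kappa eta lam / real d) - phi / real d)) / (sin (phi / real d) ^ d * sin (real d * (kappa eta lam / real d)))"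
    unfolding vv_def by (rule cot_prod_minus) (use d1 dn v_cond sb in auto)
  also have "real d * ((kappa eta lam / real d) - phi / real d) = kappa eta lam - phi" using dpos al by (simp add: field_simps)
  also have "real d * (kappa eta lam / real d) = kappa eta lam" using dpos al by (simp add: field_simps)
  finally show ?thesis .
qed

lemma prod_v_plus: assumes sb: "sin (phi / real d) \<noteq> 0"
  shows "(\<Prod>k<d. cot (phi / real d) + vv eta lam d k) = sin (kappa eta lam + phi) / (sin (phi / real d) ^ d * sin (kappa eta lam))"
proof -
  have "(\<Prod>k<d. cot (phi / real d) + vv eta lam d k) = sin (real d * ((kappa eta lam / real d) + phi / real d)) / (sin (phi / real d) ^ d * sin (real d * (kappa eta lam / real d)))"
    unfolding vv_def by (rule cot_prod_plus) (use d1 dn v_cond sb in auto)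
  also have "real d * ((kappa eta lam / real d) + phi / real d) = kappa eta lam + phi" using dpos al by (simp add: field_simps)
  also have "real d * (kappa eta lam / real d) = kappa eta lam" using dpos al by (simp add: field_simps)
  finally show ?thesis .
qed

lemma prod_u_minus: assumes sb: "sin (phi / real d) \<noteq> 0"
  shows "(\<Prod>k<d. cot (phi / real d) - uu eta lam d k) = sin (kappa eta lam + 2 * eta - phi) / (sin (phi / real d) ^ d * sin (kappa eta lam + 2 * eta))"
proof -
  have "(\<Prod>k<d. cot (phi / real d) - uu eta lam d k) = sin (real d * ((kappa eta lam / real d + 2 * eta / real d) - phi / real d)) / (sin (phi / real d) ^ d * sin (real d * (kappa eta lam / real d + 2 * eta / real d)))"
    unfolding uu_def by (rule cot_prod_minus) (use d1 dn u_cond sb in auto)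
  also have "real d * ((kappa eta lam / real d + 2 * eta / real d) - phi / real d) = kappa eta lam + 2 * eta - phi" using dpos al by (simp add: field_simps)
  also have "real d * (kappa eta lam / real d + 2 * eta / real d) = kappa eta lam + 2 * eta" using dpos al by (simp add: field_simps)
  finally show ?thesis .
qed

lemma prod_u_plus: assumes sb: "sin (phi / real d) \<noteq> 0"
  shows "(\<Prod>k<d. cot (phi / real d) + uu eta lam d k) = sin (kappa eta lam + 2 * eta + phi) / (sin (phi / real d) ^ d * sin (kappa eta lam + 2 * eta))"
proof -
  have "(\<Prod>k<d. cot (phi / real d) + uu eta lam d k) = sin (real d * ((kappa eta lam / real d + 2 * eta / real d) + phi / real d)) / (sin (phi / real d) ^ d * sin (real d * (kappa eta lam / real d + 2 * eta / real d)))"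
    unfolding uu_def by (rule cot_prod_plus) (use d1 dn u_cond sb in auto)
  also have "real d * ((kappa eta lam / real d + 2 * eta / real d) + phi / real d) = kappa eta lam + 2 * eta + phi" using dpos al by (simp add: field_simps)
  also have "real d * (kappa eta lam / real d + 2 * eta / real d) = kappa eta lam + 2 * eta" using dpos al by (simp add: field_simps)
  finally show ?thesis .
qed

lemma prod_w_minus: assumes sb: "sin (phi / real d) \<noteq> 0"
  shows "(\<Prod>k<n. cot (phi / real d) - ww eta lam n d k) = sin (alpha eta * (kappa eta lam - phi)) / (sin (phi / real d) ^ n * sin (alpha eta * kappa eta lam))"
proof -
  have "(\<Prod>k<n. cot (phi / real d) - ww eta lam n d k) = sin (real n * ((kappa eta lam / real d) - phi / real d)) / (sin (phi / real d) ^ n * sin (real n * (kappa eta lam / real d)))"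
    unfolding ww_def by (rule cot_prod_minus) (use d1 dn w_cond sb in auto)
  also have "real n * ((kappa eta lam / real d) - phi / real d) = alpha eta * (kappa eta lam - phi)" using dpos al by (simp add: field_simps)
  also have "real n * (kappa eta lam / real d) = alpha eta * kappa eta lam" using dpos al by (simp add: field_simps)
  finally show ?thesis .
qed

lemma prod_w_plus: assumes sb: "sin (phi / real d) \<noteq> 0"
  shows "(\<Prod>k<n. cot (phi / real d) + ww eta lam n d k) = sin (alpha eta * (kappa eta lam + phi)) / (sin (phi / real d) ^ n * sin (alpha eta * kappa eta lam))"
proof -
  have "(\<Prod>k<n. cot (phi / real d) + ww eta lam n d k) = sin (real n * ((kappa eta lam / real d) + phi / real d)) / (sin (phi / real d) ^ n * sin (real n * (kappa eta lam / real d)))"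
    unfolding ww_def by (rule cot_prod_plus) (use d1 dn w_cond sb in auto)
  also have "real n * ((kappa eta lam / real d) + phi / real d) = alpha eta * (kappa eta lam + phi)" using dpos al by (simp add: field_simps)
  also have "real n * (kappa eta lam / real d) = alpha eta * kappa eta lam" using dpos al by (simp add: field_simps)
  finally show ?thesis .
qed

end



lemma poly_div_eval: "D dvd Q \<Longrightarrow> poly D t \<noteq> 0 \<Longrightarrow> poly (Q div D) t = poly Q t / poly D t"
  for D Q :: "real poly"
  by (metis dvd_mult_div_cancel nonzero_eq_divide_eq poly_mult mult.commute)

context
  fixes eta lam :: real and n d :: nat
  assumes eta0: "0 < eta" and eta1: "eta < pi/2" and d1: "1 \<le> d" and dn: "d < n"
    and al: "alpha eta = real n / real d" and l0: "eta < lam" and l1: "lam < pi - eta"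
begin

lemmas facts = eta0 eta1 d1 dn al l0 l1

lemma v0w0: "vv eta lam d 0 = ww eta lam n d 0" by (simp add: vv_def ww_def)

lemma ulast: "uu eta lam d (d - 1) = ww eta lam n d (n - 1)"
proof -
  have e: "2 * eta = pi - pi * real d / real n" by (rule eta_eq[OF facts])
  have "kappa eta lam / real d + 2 * eta / real d + pi * real (d - 1) / real d
      = kappa eta lam / real d + (pi - pi * real d / real n) / real d + pi * (real d - 1) / real d"
    using e d1 by (simp add: of_nat_diff)
  also have "\<dots> = kappa eta lam / real d + pi * (real n - 1) / real n"
    using dpos[OF facts] npos[OF facts] by (simp add: field_simps)
  also have "\<dots> = kappa eta lam / real d + pi * real (n - 1) / real n"
    using dn by (simp add: of_nat_diff)
  finally have "kappa eta lam / real d + 2 * eta / real d + pi * real (d - 1) / real d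
      = kappa eta lam / real d + pi * real (n - 1) / real n" .
  thus ?thesis unfolding uu_def ww_def by (rule arg_cong[where f=cot])
qed

abbreviation "lm \<equiv> lin_minus"
abbreviation "lp \<equiv> lin_plus"
abbreviation "W \<equiv> ww eta lam n d"
abbreviation "V \<equiv> vv eta lam d"
abbreviation "U \<equiv> uu eta lam d"

lemma A_split: "(\<Prod>j<n. lm (W j) * lp (W j)) =
   (lm (W 0) * lp (W 0)) * (lm (W (n-1)) * lp (W (n-1))) * (\<Prod>j\<in>{1..<n-1}. lm (W j) * lp (W j))"
proof -
  have "{..<n} = insert 0 (insert (n-1) {1..<n-1})" using dn d1 by auto
  moreover have "0 \<notin> insert (n-1) {1..<n-1}" "n - 1 \<notin> {1..<n-1}" using dn d1 by auto
  ultimately show ?thesis by (simp add: mult_ac)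
qed

lemma split0: "(\<Prod>k<d. f k) = f 0 * (\<Prod>k\<in>{1..<d}. f k)" for f :: "nat \<Rightarrow> real poly"
proof -
  have "{..<d} = insert 0 {1..<d}" using d1 by auto
  thus ?thesis by simp
qed

lemma splitlast: "(\<Prod>k<d. f k) = f (d-1) * (\<Prod>k<d-1. f k)" for f :: "nat \<Rightarrow> real poly"
proof -
  have "{..<d} = insert (d-1) {..<d-1}" using d1 by auto
  thus ?thesis by simp
qed

lemma Q_eq: "Qpoly eta lam n d = (\<Prod>j<n. lm (W j) * lp (W j)) * (\<Prod>k\<in>{1..<d}. lm (V k) * lp (V k)) * (\<Prod>k<d-1. lm (U k) * lp (U k))"
  by (simp add: Qpoly_def)

lemma D1_dvd: "D1 eta lam d dvd Qpoly eta lam n d"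
proof -
  have "D1 eta lam d = (\<Prod>k<d. lm (V k)) * (\<Prod>k<d. lm (U k))" by (simp add: D1_def prod.distrib)
  also have "\<dots> = (lm (W 0) * lm (W (n-1))) * (\<Prod>k\<in>{1..<d}. lm (V k)) * (\<Prod>k<d-1. lm (U k))"
    by (simp add: split0[of "\<lambda>k. lm (V k)"] splitlast[of "\<lambda>k. lm (U k)"] v0w0 ulast[simplified] mult_ac)
  also have "\<dots> dvd Qpoly eta lam n d"
  proof -
    have a1: "lm (W 0) dvd lm (W 0) * lp (W 0)" by simp
    have a2: "lm (W (n-1)) dvd lm (W (n-1)) * lp (W (n-1))" by simp
    have h1: "lm (W 0) * lm (W (n-1)) dvd (lm (W 0) * lp (W 0)) * (lm (W (n-1)) * lp (W (n-1))) * (\<Prod>j\<in>{1..<n-1}. lm (W j) * lp (W j))"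
      by (rule dvd_mult2) (rule mult_dvd_mono[OF a1 a2])
    have h2: "(\<Prod>k\<in>{1..<d}. lm (V k)) dvd (\<Prod>k\<in>{1..<d}. lm (V k) * lp (V k))"
      by (rule prod_dvd_prod) simp
    have h3: "(\<Prod>k<d-1. lm (U k)) dvd (\<Prod>k<d-1. lm (U k) * lp (U k))"
      by (rule prod_dvd_prod) simp
    show ?thesis unfolding Q_eq A_split by (rule mult_dvd_mono[OF mult_dvd_mono[OF h1 h2] h3])
  qed
  finally show ?thesis .
qed

lemma D2_dvd: "D2 eta lam d dvd Qpoly eta lam n d"
proof -
  have "D2 eta lam d = (\<Prod>k<d. lp (V k)) * (\<Prod>k<d. lp (U k))" by (simp add: D2_def prod.distrib)
  also have "\<dots> = (lp (W 0) * lp (W (n-1))) * (\<Prod>k\<in>{1..<d}. lp (V k)) * (\<Prod>k<d-1. lp (U k))"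
    by (simp add: split0[of "\<lambda>k. lp (V k)"] splitlast[of "\<lambda>k. lp (U k)"] v0w0 ulast[simplified] mult_ac)
  also have "\<dots> dvd Qpoly eta lam n d"
  proof -
    have a1: "lp (W 0) dvd lm (W 0) * lp (W 0)" by simp
    have a2: "lp (W (n-1)) dvd lm (W (n-1)) * lp (W (n-1))" by simp
    have h1: "lp (W 0) * lp (W (n-1)) dvd (lm (W 0) * lp (W 0)) * (lm (W (n-1)) * lp (W (n-1))) * (\<Prod>j\<in>{1..<n-1}. lm (W j) * lp (W j))"
      by (rule dvd_mult2) (rule mult_dvd_mono[OF a1 a2])
    have h2: "(\<Prod>k\<in>{1..<d}. lp (V k)) dvd (\<Prod>k\<in>{1..<d}. lm (V k) * lp (V k))"
      by (rule prod_dvd_prod) simp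
    have h3: "(\<Prod>k<d-1. lp (U k)) dvd (\<Prod>k<d-1. lm (U k) * lp (U k))"
      by (rule prod_dvd_prod) simp
    show ?thesis unfolding Q_eq A_split by (rule mult_dvd_mono[OF mult_dvd_mono[OF h1 h2] h3])
  qed
  finally show ?thesis .
qed

lemma D3_dvd: "D3 eta lam d dvd Qpoly eta lam n d"
proof -
  have "D3 eta lam d = (lm (W 0) * lp (W 0)) * (\<Prod>k\<in>{1..<d}. lm (V k) * lp (V k))"
    by (simp add: D3_def split0[of "\<lambda>k. lm (V k) * lp (V k)"] v0w0)
  also have "\<dots> dvd Qpoly eta lam n d" unfolding Q_eq A_split
    by (intro dvd_mult2 mult_dvd_mono) auto
  finally show ?thesis .
qed

lemma D4_dvd: "D4 eta lam n d dvd Qpoly eta lam n d"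
  unfolding Q_eq D4_def by (intro dvd_mult2) auto

end



lemma poly_lm[simp]: "poly (lin_minus c) t = t - c" by (simp add: lin_minus_def)
lemma poly_lp[simp]: "poly (lin_plus c) t = t + c" by (simp add: lin_plus_def)

lemma pow_helper: "(s::real) \<noteq> 0 \<Longrightarrow> d \<le> n \<Longrightarrow> (1 / s^2) ^ (n - d) * (s ^ n * s ^ n) = s ^ (2 * d)"
proof -
  assume s: "s \<noteq> 0" and dn: "d \<le> n"
  have "s ^ n * s ^ n = s ^ (2 * (n - d)) * s ^ (2 * d)"
    using dn by (simp add: power_add[symmetric]) (rule arg_cong[where f="(^) s"], simp)
  moreover have "(1 / s^2) ^ (n - d) * s ^ (2 * (n - d)) = 1"
    using s by (simp add: power_mult power_one_over)
  ultimately show ?thesis by (metis mult.assoc mult_1)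
qed

context
  fixes eta lam :: real and n d :: nat
  assumes eta0: "0 < eta" and eta1: "eta < pi/2" and d1: "1 \<le> d" and dn: "d < n"
    and al: "alpha eta = real n / real d" and l0: "eta < lam" and l1: "lam < pi - eta"
begin

lemmas facts' = eta0 eta1 d1 dn al l0 l1

lemma identity:
  assumes p1: "- kappa eta lam < phi" and p2: "phi < kappa eta lam" and p3: "phi \<noteq> 0"
  shows "poly (Ppoly eta lam n d x y) (cot (phi / real d))
       = poly (Qpoly eta lam n d) (cot (phi / real d)) * sin (phi / real d) ^ (2 * d) * gfun eta lam x y phi"
proof -
  define K where "K = kappa eta lam"
  define a where "a = alpha eta"
  define s where "s = sin (phi / real d)"
  define t where "t = cot (phi / real d)"
  define q where "q = poly (Qpoly eta lam n d) t"
  have Kp: "0 < K" using kap_pos[OF facts'] by (simp add: K_def)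
  have K2: "K + eta < pi / 2" using kap_lt2[OF facts'] by (simp add: K_def)
  have aK: "a * K < pi / 2" using alkap[OF facts'] by (simp add: K_def a_def)
  have ap: "0 < a" using al_pos[OF facts'] by (simp add: a_def)
  have dp: "0 < real d" using d1 by simp
  have s0: "s \<noteq> 0"
  proof -
    have "\<bar>phi\<bar> * 1 \<le> \<bar>phi\<bar> * real d" by (rule mult_left_mono) (use d1 in auto)
    hence "\<bar>phi / real d\<bar> \<le> \<bar>phi\<bar>" using dp by (simp add: abs_div divide_le_eq)
    hence b1: "\<bar>phi / real d\<bar> < pi" using p1 p2 K2 eta0 by (simp add: K_def)
    have b2: "phi / real d \<noteq> 0" using p3 dp by simp
    show ?thesis
    proof (cases "phi > 0")
      case True thus ?thesis unfolding s_def using b1 dp by (intro sin_ne0) auto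
    next
      case False
      hence "sin (- (phi / real d)) \<noteq> 0" using b1 b2 dp by (intro sin_ne0) (auto simp: divide_less_0_iff)
      thus ?thesis unfolding s_def by simp
    qed
  qed
  have am0: "a * (K - phi) < a * (2 * K)" "a * (K + phi) < a * (2 * K)"
    using ap p1 p2 by (auto simp: K_def intro!: mult_strict_left_mono)
  have am1: "a * (2 * K) = 2 * (a * K)" by simp
  have am: "a * (K - phi) < pi" "a * (K + phi) < pi" "0 < a * (K - phi)" "0 < a * (K + phi)"
    using am0 am1 aK apply linarith using am0 am1 aK apply linarith
    using ap p1 p2 by (auto simp: K_def)
  have pos: "sin (K - phi) > 0" "sin (K + phi) > 0" "sin (K + 2*eta - phi) > 0" "sin (K + 2*eta + phi) > 0"
       "sin K > 0" "sin (K + 2 * eta) > 0" "sin (a * K) > 0" "sin (a * (K - phi)) > 0" "sin (a * (K + phi)) > 0"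
    using p1 p2 Kp K2 eta0 aK ap am by (auto simp: K_def intro!: sin_gt_zero)
  have v1: "(\<Prod>k<d. t - vv eta lam d k) = sin (K - phi) / (s ^ d * sin K)"
    using prod_v_minus[OF facts' s0[unfolded s_def]] by (simp add: K_def s_def t_def)
  have v2: "(\<Prod>k<d. t + vv eta lam d k) = sin (K + phi) / (s ^ d * sin K)"
    using prod_v_plus[OF facts' s0[unfolded s_def]] by (simp add: K_def s_def t_def)
  have u1: "(\<Prod>k<d. t - uu eta lam d k) = sin (K + 2*eta - phi) / (s ^ d * sin (K + 2*eta))"
    using prod_u_minus[OF facts' s0[unfolded s_def]] by (simp add: K_def s_def t_def)
  have u2: "(\<Prod>k<d. t + uu eta lam d k) = sin (K + 2*eta + phi) / (s ^ d * sin (K + 2*eta))"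
    using prod_u_plus[OF facts' s0[unfolded s_def]] by (simp add: K_def s_def t_def)
  have w1: "(\<Prod>k<n. t - ww eta lam n d k) = sin (a * (K - phi)) / (s ^ n * sin (a * K))"
    using prod_w_minus[OF facts' s0[unfolded s_def]] by (simp add: K_def s_def t_def a_def)
  have w2: "(\<Prod>k<n. t + ww eta lam n d k) = sin (a * (K + phi)) / (s ^ n * sin (a * K))"
    using prod_w_plus[OF facts' s0[unfolded s_def]] by (simp add: K_def s_def t_def a_def)
  have D1v: "poly (D1 eta lam d) t = sin (K - phi) / (s ^ d * sin K) * (sin (K + 2*eta - phi) / (s ^ d * sin (K + 2*eta)))"
    by (simp add: D1_def poly_prod prod.distrib v1 u1)
  have D2v: "poly (D2 eta lam d) t = sin (K + phi) / (s ^ d * sin K) * (sin (K + 2*eta + phi) / (s ^ d * sin (K + 2*eta)))"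
    by (simp add: D2_def poly_prod prod.distrib v2 u2)
  have D3v: "poly (D3 eta lam d) t = sin (K - phi) / (s ^ d * sin K) * (sin (K + phi) / (s ^ d * sin K))"
    by (simp add: D3_def poly_prod prod.distrib v1 v2)
  have D4v: "poly (D4 eta lam n d) t = sin (a * (K - phi)) / (s ^ n * sin (a * K)) * (sin (a * (K + phi)) / (s ^ n * sin (a * K)))"
    by (simp add: D4_def poly_prod prod.distrib w1 w2)
  have nz: "poly (D1 eta lam d) t \<noteq> 0" "poly (D2 eta lam d) t \<noteq> 0" "poly (D3 eta lam d) t \<noteq> 0" "poly (D4 eta lam n d) t \<noteq> 0"
    unfolding D1v D2v D3v D4v using pos s0 by auto
  have tt: "poly [:1, 0, 1:] t = 1 / s^2"
    using s0 by (simp add: t_def s_def cot_def field_simps power2_eq_square)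
  have ss: "s ^ (2 * d) = s ^ d * s ^ d" by (simp add: mult_2 power_add)
  have T1: "x * rho eta lam * (q / poly (D1 eta lam d) t) = q * s ^ (2*d) * (x * sin (2*eta) / (sin (K - phi) * sin (K + 2*eta - phi)))"
    unfolding D1v ss rho_def K_def[symmetric] using pos s0 by (simp add: field_simps)
  have T2: "y * rho eta lam * (q / poly (D2 eta lam d) t) = q * s ^ (2*d) * (y * sin (2*eta) / (sin (K + phi) * sin (K + 2*eta + phi)))"
    unfolding D2v ss rho_def K_def[symmetric] using pos s0 by (simp add: field_simps)
  have T3: "2 * cot K * (q / poly (D3 eta lam d) t) = q * s ^ (2*d) * (sin (2*K) / (sin (K + phi) * sin (K - phi)))"
    unfolding D3v ss sin_double using pos s0 by (simp add: field_simps cot_def)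
  have s2: "sin (2*a*K) = 2 * sin (a*K) * cos (a*K)" using sin_double[of "a*K"] by (simp add: mult.assoc)
  have T4: "2 * a * cot (a * K) * ((1 / s^2) ^ (n - d) * (q / poly (D4 eta lam n d) t))
      = q * s ^ (2*d) * (a * sin (2*a*K) / (sin (a * (K + phi)) * sin (a * (K - phi))))"
  proof -
    have "2 * a * cot (a * K) * ((1 / s^2) ^ (n - d) * (q / poly (D4 eta lam n d) t))
       = 2 * a * cot (a * K) * q * sin (a * K) * sin (a * K) * ((1 / s^2) ^ (n - d) * (s ^ n * s ^ n)) / (sin (a * (K - phi)) * sin (a * (K + phi)))"
      unfolding D4v using pos s0 by (simp add: field_simps)
    also have "(1 / s^2) ^ (n - d) * (s ^ n * s ^ n) = s ^ (2 * d)" using s0 dn by (intro pow_helper) auto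
    finally show ?thesis unfolding s2 using pos
      by (simp add: cot_def field_simps)
  qed
  have "poly (Ppoly eta lam n d x y) t
     = x * rho eta lam * (q / poly (D1 eta lam d) t) + y * rho eta lam * (q / poly (D2 eta lam d) t)
       - 2 * cot K * (q / poly (D3 eta lam d) t) + 2 * a * cot (a * K) * ((1 / s^2) ^ (n - d) * (q / poly (D4 eta lam n d) t))"
    unfolding Ppoly_def Let_def q_def K_def a_def
    using nz D1_dvd[OF facts'] D2_dvd[OF facts'] D3_dvd[OF facts'] D4_dvd[OF facts'] tt
    by (simp add: poly_div_eval)
  also have "\<dots> = q * s ^ (2*d) * gfun eta lam x y phi"
    unfolding T1 T2 T3 T4 gfun_def Let_def K_def[symmetric] a_def[symmetric] by (simp add: algebra_simps)
  finally show ?thesis by (simp add: t_def q_def s_def)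
qed

end



lemma div_degree: "D dvd Q \<Longrightarrow> Q \<noteq> 0 \<Longrightarrow> degree (Q div D) = degree Q - degree D"
  for D Q :: "real poly"
proof -
  assume "D dvd Q" "Q \<noteq> 0"
  then obtain E where E: "Q = D * E" by (auto simp: dvd_def)
  with \<open>Q \<noteq> 0\<close> have "D \<noteq> 0" "E \<noteq> 0" by auto
  hence "Q div D = E" "degree Q = degree D + degree E" using E by (auto simp: degree_mult_eq)
  thus ?thesis by simp
qed

lemma nz_lin[simp]: "lin_minus c \<noteq> 0" "lin_plus c \<noteq> 0"
  by (auto simp: lin_minus_def lin_plus_def)

lemma deg_lmlp: "degree (lin_minus c * lin_plus c) = 2" "lin_minus c * lin_plus c \<noteq> 0"
  by (auto simp: lin_minus_def lin_plus_def degree_mult_eq)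

lemma deg_prod_lmlp: "finite I \<Longrightarrow> degree (\<Prod>k\<in>I. lin_minus (f k) * lin_plus (f k)) = 2 * card I"
  by (subst degree_prod_sum_eq) (auto simp: deg_lmlp)

lemma nz_prod_lmlp: "(\<Prod>k\<in>I. lin_minus (f k) * lin_plus (f k)) \<noteq> 0"
  by (cases "finite I") (auto simp: deg_lmlp)

lemma deg_prod_lin: "finite I \<Longrightarrow> degree (\<Prod>k\<in>I. lin_minus (f k) * lin_minus (g k)) = 2 * card I"
  "finite I \<Longrightarrow> degree (\<Prod>k\<in>I. lin_plus (f k) * lin_plus (g k)) = 2 * card I"
  by (subst degree_prod_sum_eq; auto simp: lin_minus_def lin_plus_def degree_mult_eq)+

lemma degQ: "degree (Qpoly eta lam n d) = 2 * n + 2 * (d - 1) + 2 * (d - 1)"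
  "Qpoly eta lam n d \<noteq> 0"
proof -
  have a: "degree (\<Prod>j<n. lin_minus (ww eta lam n d j) * lin_plus (ww eta lam n d j)) = 2 * n"
    by (simp add: deg_prod_lmlp)
  have b: "degree (\<Prod>k\<in>{1..<d}. lin_minus (vv eta lam d k) * lin_plus (vv eta lam d k)) = 2 * (d - 1)"
    by (simp add: deg_prod_lmlp)
  have c: "degree (\<Prod>k<d-1. lin_minus (uu eta lam d k) * lin_plus (uu eta lam d k)) = 2 * (d - 1)"
    by (simp add: deg_prod_lmlp)
  note nz = nz_prod_lmlp[where I="{..<n}" and f="ww eta lam n d"] nz_prod_lmlp[where I="{1..<d}" and f="vv eta lam d"] nz_prod_lmlp[where I="{..<d-1}" and f="uu eta lam d"]
  show "degree (Qpoly eta lam n d) = 2 * n + 2 * (d - 1) + 2 * (d - 1)"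
    unfolding Qpoly_def using nz a b c by (simp add: degree_mult_eq)
  show "Qpoly eta lam n d \<noteq> 0" unfolding Qpoly_def using nz by simp
qed

lemma sin_nz_phi:
  assumes "0 < K" "K < pi" "- K < phi" "phi < K" "phi \<noteq> 0" "1 \<le> d"
  shows "sin (phi / real d) \<noteq> 0"
proof -
  have dp: "0 < real d" using assms by simp
  have "\<bar>phi\<bar> * 1 \<le> \<bar>phi\<bar> * real d" by (rule mult_left_mono) (use assms in auto)
  hence "\<bar>phi / real d\<bar> \<le> \<bar>phi\<bar>" using dp by (simp add: abs_div divide_le_eq)
  hence b1: "\<bar>phi / real d\<bar> < pi" using assms by linarith
  have b2: "phi / real d \<noteq> 0" using assms dp by simp
  show ?thesis
  proof (cases "phi > 0")
    case True thus ?thesis using b1 dp by (intro sin_ne0) auto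
  next
    case False
    hence "sin (- (phi / real d)) \<noteq> 0" using b1 b2 dp by (intro sin_ne0) (auto simp: divide_less_0_iff)
    thus ?thesis by simp
  qed
qed

context
  fixes eta lam :: real and n d :: nat
  assumes eta0: "0 < eta" and eta1: "eta < pi/2" and d1: "1 \<le> d" and dn: "d < n"
    and al: "alpha eta = real n / real d" and l0: "eta < lam" and l1: "lam < pi - eta"
begin

lemmas facts'' = eta0 eta1 d1 dn al l0 l1

lemma degP: "degree (Ppoly eta lam n d x y) \<le> Nn n d"
proof -
  let ?Q = "Qpoly eta lam n d"
  have dQ: "degree ?Q = 2 * n + 4 * d - 4" using degQ d1 by simp
  have e1: "degree (?Q div D1 eta lam d) \<le> Nn n d"
    using div_degree[OF D1_dvd[OF facts''] degQ(2)] dQ d1 by (simp add: D1_def deg_prod_lin Nn_def)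
  have e2: "degree (?Q div D2 eta lam d) \<le> Nn n d"
    using div_degree[OF D2_dvd[OF facts''] degQ(2)] dQ d1 by (simp add: D2_def deg_prod_lin Nn_def)
  have e3: "degree (?Q div D3 eta lam d) \<le> Nn n d"
    using div_degree[OF D3_dvd[OF facts''] degQ(2)] dQ d1 by (simp add: D3_def deg_prod_lmlp Nn_def)
  have e4: "degree (?Q div D4 eta lam n d) = 4 * d - 4"
    using div_degree[OF D4_dvd[OF facts''] degQ(2)] dQ d1 by (simp add: D4_def deg_prod_lmlp Nn_def)
  have p: "degree ([:1, 0, 1:] ^ (n - d) :: real poly) \<le> 2 * (n - d)"
    using degree_power_le[of "[:1, 0, 1:] :: real poly" "n - d"] by simp
  have e4': "degree ([:1, 0, 1:] ^ (n - d) * (?Q div D4 eta lam n d)) \<le> Nn n d"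
    using degree_mult_le[of "[:1, 0, 1:] ^ (n - d) :: real poly" "?Q div D4 eta lam n d"] p e4 d1 dn
    by (simp add: Nn_def)
  show ?thesis unfolding Ppoly_def Let_def
    by (intro degree_add_le degree_diff_le order_trans[OF degree_smult_le] e1 e2 e3 e4')
qed

lemma double_root:
  assumes p1: "- kappa eta lam < phi" and p2: "phi < kappa eta lam" and p3: "phi \<noteq> 0"
    and g0: "gfun eta lam x y phi = 0" and g1: "(gfun eta lam x y has_real_derivative 0) (at phi)"
  shows "poly (Ppoly eta lam n d x y) (cot (phi / real d)) = 0 \<and> poly (pderiv (Ppoly eta lam n d x y)) (cot (phi / real d)) = 0"
proof -
  let ?P = "Ppoly eta lam n d x y"
  let ?Q = "Qpoly eta lam n d"
  let ?g = "gfun eta lam x y"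
  define h where "h = (\<lambda>psi. poly ?Q (cot (psi / real d)) * sin (psi / real d) ^ (2 * d))"
  define S where "S = {- kappa eta lam <..< kappa eta lam} - {0}"
  have K: "0 < kappa eta lam" "kappa eta lam < pi" using kap_pos[OF facts''] kap_lt2[OF facts''] eta0 by auto
  have sn: "sin (phi / real d) \<noteq> 0" using sin_nz_phi[OF K p1 p2 p3 d1] .
  have S: "open S" "phi \<in> S" using p1 p2 p3 by (auto simp: S_def)
  have id: "\<And>psi. psi \<in> S \<Longrightarrow> ?g psi * h psi = poly ?P (cot (psi / real d))"
    using identity[OF facts''] by (auto simp: S_def h_def mult_ac)
  have c0: "((\<lambda>psi. psi / real d) has_real_derivative 1 / real d) (at phi)"
    using d1 by (auto intro!: derivative_eq_intros)
  have c1: "((\<lambda>psi. cot (psi / real d)) has_real_derivative (- inverse (sin (phi / real d) ^ 2)) * (1 / real d)) (at phi)"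
    by (rule DERIV_chain2[OF DERIV_cot[OF sn] c0])
  have c2: "((\<lambda>psi. poly ?Q (cot (psi / real d))) has_real_derivative poly (pderiv ?Q) (cot (phi / real d)) * ((- inverse (sin (phi / real d) ^ 2)) * (1 / real d))) (at phi)"
    by (rule DERIV_chain2[OF poly_DERIV c1])
  have c3: "((\<lambda>psi. sin (psi / real d)) has_real_derivative cos (phi / real d) * (1 / real d)) (at phi)"
    by (rule DERIV_chain2[OF DERIV_sin c0])
  obtain h' where hd: "(h has_real_derivative h') (at phi)"
    using DERIV_mult[OF c2 DERIV_power[OF c3, of "2 * d"]] unfolding h_def by blast
  have "((\<lambda>psi. ?g psi * h psi) has_real_derivative 0 * h phi + h' * ?g phi) (at phi)"
    by (rule DERIV_mult[OF g1 hd])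
  hence "((\<lambda>psi. ?g psi * h psi) has_real_derivative 0) (at phi)" using g0 by simp
  hence d1': "((\<lambda>psi. poly ?P (cot (psi / real d))) has_real_derivative 0) (at phi)"
    by (rule has_field_derivative_transform_within_open[OF _ S]) (rule id)
  have d2: "((\<lambda>psi. poly ?P (cot (psi / real d))) has_real_derivative poly (pderiv ?P) (cot (phi / real d)) * ((- inverse (sin (phi / real d) ^ 2)) * (1 / real d))) (at phi)"
    by (rule DERIV_chain2[OF poly_DERIV c1])
  have "poly (pderiv ?P) (cot (phi / real d)) * ((- inverse (sin (phi / real d) ^ 2)) * (1 / real d)) = 0"
    using DERIV_unique[OF d2 d1'] .
  moreover have "real d \<noteq> 0" using d1 by simp
  ultimately have "poly (pderiv ?P) (cot (phi / real d)) = 0" using sn by simp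
  moreover have "poly ?P (cot (phi / real d)) = 0" using id[OF S(2)] g0 by simp
  ultimately show ?thesis by simp
qed

end



lemma pf_diff: "pf m f \<Longrightarrow> pf m g \<Longrightarrow> pf m (\<lambda>x y. f x y - g x y)"
  using pf_add[of m f "\<lambda>x y. (-1) * g x y"] pf_scale[of m g "-1"] by simp

lemma pf_coeffP: "pf 1 (\<lambda>x y. coeff (Ppoly eta lam n d x y) k)"
proof -
  define Q where "Q = Qpoly eta lam n d"
  define A where "A = rho eta lam * coeff (Q div D1 eta lam d) k"
  define B where "B = rho eta lam * coeff (Q div D2 eta lam d) k"
  define C where "C = - (2 * cot (kappa eta lam) * coeff (Q div D3 eta lam d) k)
      + 2 * alpha eta * cot (alpha eta * kappa eta lam) * coeff ([:1, 0, 1:] ^ (n - d) * (Q div D4 eta lam n d)) k"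
  have "(\<lambda>x y. coeff (Ppoly eta lam n d x y) k) = (\<lambda>x y. A * x + B * y + C)"
    unfolding Ppoly_def Let_def A_def B_def C_def Q_def by (intro ext) (simp add: algebra_simps)
  thus ?thesis using pf_affine by simp
qed

lemma coeff_xmult: "coeff ([:0, 1:] * q) k = (if k = 0 then 0 else coeff q (k - 1))"
  for q :: "real poly"
  by (cases k) (auto simp: coeff_pCons)

lemma coeff_pCons0: "coeff (pCons 0 q) k = (if k = 0 then 0 else coeff q (k - 1))"
  by (cases k) auto

lemma pf_if: "pf m f \<Longrightarrow> pf m g \<Longrightarrow> pf m (\<lambda>x y. if c then f x y else g x y)"
  by (cases c) simp_all

lemma pf_coeff_pderiv: "(\<And>k. pf 1 (\<lambda>x y. coeff (P x y) k)) \<Longrightarrow> pf 1 (\<lambda>x y. coeff (pderiv (P x y)) k)"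
  by (simp add: coeff_pderiv pf_scale)

lemma pf_coeff_Pt: "(\<And>k. pf 1 (\<lambda>x y. coeff (P x y) k)) \<Longrightarrow>
   pf 1 (\<lambda>x y. coeff (smult (of_nat N) (P x y) - [:0, 1:] * pderiv (P x y)) k)"
proof -
  assume h: "\<And>k. pf 1 (\<lambda>x y. coeff (P x y) k)"
  show ?thesis
  proof (cases "k = 0")
    case True thus ?thesis using h by (simp add: coeff_xmult coeff_pCons0 pf_scale)
  next
    case False
    thus ?thesis using h pf_coeff_pderiv[OF h, of "k - 1"]
      by (simp add: coeff_xmult coeff_pCons0 pf_scale pf_diff)
  qed
qed

lemma pf_entry:
  assumes hA: "\<And>k. pf 1 (\<lambda>x y. coeff (A x y) k)" and hB: "\<And>k. pf 1 (\<lambda>x y. coeff (B x y) k)"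
    and i: "i < mA + mB" and j: "j < mA + mB"
  shows "pf 1 (\<lambda>x y. sylvester mA mB (A x y) (B x y) $$ (i, j))"
proof -
  have e: "(\<lambda>x y. sylvester mA mB (A x y) (B x y) $$ (i, j)) = (\<lambda>x y.
     if i < mB then (if i \<le> j \<and> j - i \<le> mA then coeff (A x y) (j - i) else 0)
     else (if i - mB \<le> j \<and> j - (i - mB) \<le> mB then coeff (B x y) (j - (i - mB)) else 0))"
    using i j by (intro ext) (simp add: sylvester_def)
  show ?thesis unfolding e
    by (intro pf_if hA hB pf_const)
qed

lemma pf_det:
  assumes hA: "\<And>k. pf 1 (\<lambda>x y. coeff (A x y) k)" and hB: "\<And>k. pf 1 (\<lambda>x y. coeff (B x y) k)"
  shows "pf (mA + mB) (\<lambda>x y. det (sylvester mA mB (A x y) (B x y)))"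
proof -
  let ?L = "mA + mB"
  have car: "\<And>x y. sylvester mA mB (A x y) (B x y) \<in> carrier_mat ?L ?L" by (simp add: sylvester_def)
  have e: "(\<lambda>x y. det (sylvester mA mB (A x y) (B x y))) = (\<lambda>x y. \<Sum>p\<in>{p. p permutes {0..<?L}}.
       signof p * (\<Prod>i\<in>{0..<?L}. sylvester mA mB (A x y) (B x y) $$ (i, p i)))"
    by (intro ext) (rule det_def'[OF car])
  have "pf (card {0..<?L}) (\<lambda>x y. \<Sum>p\<in>{p. p permutes {0..<?L}}.
       signof p * (\<Prod>i\<in>{0..<?L}. sylvester mA mB (A x y) (B x y) $$ (i, p i)))"
  proof (intro pf_sum pf_scale pf_prod finite_permutations)
    fix p i assume p: "p \<in> {p. p permutes {0..<?L}}" and i: "i \<in> {0..<?L}"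
    have "p i \<in> {0..<?L}" using p i permutes_in_image by fastforce
    thus "pf 1 (\<lambda>x y. sylvester mA mB (A x y) (B x y) $$ (i, p i))"
      using i by (intro pf_entry hA hB) auto
  qed auto
  thus ?thesis unfolding e by simp
qed

theorem corollary1:
  fixes eta lam :: real and n d :: nat
  assumes "0 < eta" "eta < pi / 2"
    and "1 \<le> d" "d < n" "coprime n d"
    and "alpha eta = real n / real d"
    and "eta < lam" "lam < pi - eta"
  shows "(\<exists>c :: nat \<Rightarrow> nat \<Rightarrow> real. \<forall>x y.
            Upsilon eta lam n d x y =
              (\<Sum>i\<le>4*(n+d)-10. \<Sum>j\<le>4*(n+d)-10-i. c i j * x ^ i * y ^ j))
       \<and> (\<forall>x y. (\<exists>phi. - kappa eta lam < phi \<and> phi < kappa eta lam \<and> phi \<noteq> 0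
                   \<and> gfun eta lam x y phi = 0
                   \<and> (gfun eta lam x y has_real_derivative 0) (at phi))
                \<longrightarrow> Upsilon eta lam n d x y = 0)"
proof
  note facts = assms(1,2,3,4,6,7,8)
  define N where "N = Nn n d"
  have N2: "2 \<le> N" using assms(3,4) by (simp add: N_def Nn_def)
  have L: "(N - 1) + (N - 1) = 4*(n+d)-10" using assms(3,4) by (simp add: N_def Nn_def)
  let ?P = "\<lambda>x y. Ppoly eta lam n d x y"
  let ?Pt = "\<lambda>x y. smult (of_nat N) (?P x y) - [:0, 1:] * pderiv (?P x y)"
  have U: "\<And>x y. Upsilon eta lam n d x y = (-1) ^ (N * (N - 1) div 2) * det (sylvester (N - 1) (N - 1) (?Pt x y) (pderiv (?P x y)))"
    by (simp add: Upsilon_def N_def Let_def)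
  have "pf ((N - 1) + (N - 1)) (\<lambda>x y. (-1) ^ (N * (N - 1) div 2) * det (sylvester (N - 1) (N - 1) (?Pt x y) (pderiv (?P x y))))"
    by (intro pf_scale pf_det pf_coeff_Pt pf_coeff_pderiv pf_coeffP)
  hence "pf (4*(n+d)-10) (Upsilon eta lam n d)" unfolding L U by simp
  thus "\<exists>c :: nat \<Rightarrow> nat \<Rightarrow> real. \<forall>x y.
            Upsilon eta lam n d x y =
              (\<Sum>i\<le>4*(n+d)-10. \<Sum>j\<le>4*(n+d)-10-i. c i j * x ^ i * y ^ j)"
    by (rule pf_final)
  show "\<forall>x y. (\<exists>phi. - kappa eta lam < phi \<and> phi < kappa eta lam \<and> phi \<noteq> 0
                   \<and> gfun eta lam x y phi = 0
                   \<and> (gfun eta lam x y has_real_derivative 0) (at phi))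
                \<longrightarrow> Upsilon eta lam n d x y = 0"
  proof (intro allI impI)
    fix x y
    assume "\<exists>phi. - kappa eta lam < phi \<and> phi < kappa eta lam \<and> phi \<noteq> 0
                   \<and> gfun eta lam x y phi = 0
                   \<and> (gfun eta lam x y has_real_derivative 0) (at phi)"
    then obtain phi where ph: "- kappa eta lam < phi" "phi < kappa eta lam" "phi \<noteq> 0"
      "gfun eta lam x y phi = 0" "(gfun eta lam x y has_real_derivative 0) (at phi)" by blast
    define t where "t = cot (phi / real d)"
    have z: "poly (?P x y) t = 0" "poly (pderiv (?P x y)) t = 0"
      using double_root[OF facts ph] by (auto simp: t_def)
    have dP: "degree (?P x y) \<le> N" using degP[OF facts] by (simp add: N_def)
    have dPt: "degree (?Pt x y) \<le> N - 1"
    proof (rule degree_le, intro allI impI)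
      fix i assume i: "N - 1 < i"
      hence i1: "i \<ge> 1" "i \<ge> N" using N2 by auto
      have "coeff (?Pt x y) i = of_nat N * coeff (?P x y) i - of_nat i * coeff (?P x y) i"
        using i1 by (simp add: coeff_xmult coeff_pCons0 coeff_pderiv)
      also have "\<dots> = 0"
      proof (cases "i = N")
        case False hence "i > N" using i1 by simp
        hence "coeff (?P x y) i = 0" using dP by (intro coeff_eq_0) simp
        thus ?thesis by simp
      qed simp
      finally show "coeff (?Pt x y) i = 0" .
    qed
    have dP': "degree (pderiv (?P x y)) \<le> N - 1" using dP by (simp add: degree_pderiv)
    have zt: "poly (?Pt x y) t = 0" using z by simp
    have "det (sylvester (N - 1) (N - 1) (?Pt x y) (pderiv (?P x y))) = 0"
      by (rule sylvester_det_zero[OF dPt dP' zt z(2)]) (use N2 in simp)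
    thus "Upsilon eta lam n d x y = 0" unfolding U by simp
  qed
qed



end
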